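(* Let $W$ be a vector lattice carrying a faithful positive linear functional $\psi$. Assume that $W$ is monotone sequentially complete, and that $V$ is a monotone sequentially closed subset of $W$. Then $W$ is monotone complete, and $V$ is monotone closed in $W$. Moreover, the following monotone selection principle holds: whenever $J$ is a non-empty upward directed subset of $V$ that is upper bounded in $W$, there exists an increasing sequence $(j_n)$ in $J$ with $\sup_n j_n = \sup J$ in $W$; in fact every increasing sequence $(j_n)$ in $J$ with $\sup_n \psi(j_n) = \sup_{j\in J}\psi(j)$ satisfies $\sup_n j_n = \sup J$ in $W$, and also $\sup_n j_n = \sup J$ in $V$.
   Context: Let $W$ be an ordered (real) vector space with positive cone $W_+$. $W$ is called monotone complete if every non-empty upward directed subset of $W$ that is bounded above has a supremum in $W$; $W$ is called monotone sequentially complete if every increasing sequence in $W$ that is bounded above has a supremum in $W$. If $W$ is monotone complete, a subset $V\subseteq W$ is called monotone closed in $W$ if $V$ contains the supremum in $W$ of every non-empty upward directed subset of $V$ that is upper bounded in $W$. If $W$ is monotone sequentially complete, $V\subseteq W$ is called monotone sequentially closed in $W$ if $V$ contains the supremum in $W$ of every increasing sequence in $V$ that is upper bounded in $W$. A positive linear functional $\psi$ on $W$ is called faithful if $\psi(a)>0$ for every $a\in W_+\setminus\{0\}$. *)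

theory Defs
  imports "HOL-Analysis.Analysis"
begin

text \<open>Ordered vector spaces are modelled by the type class ordered_real_vector;
  a vector lattice (Riesz space) is an ordered_real_vector whose order is a lattice.\<close>

definition upper_bound :: "'a::order set \<Rightarrow> 'a \<Rightarrow> bool" where
  "upper_bound S u \<longleftrightarrow> (\<forall>x\<in>S. x \<le> u)"

definition bounded_above :: "'a::order set \<Rightarrow> bool" where
  "bounded_above S \<longleftrightarrow> (\<exists>u. upper_bound S u)"

definition is_sup :: "'a::order set \<Rightarrow> 'a \<Rightarrow> bool" where
  "is_sup S s \<longleftrightarrow> upper_bound S s \<and> (\<forall>u. upper_bound S u \<longrightarrow> s \<le> u)"

definition is_sup_in :: "'a::order set \<Rightarrow> 'a set \<Rightarrow> 'a \<Rightarrow> bool" where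
  "is_sup_in V S s \<longleftrightarrow> s \<in> V \<and> upper_bound S s \<and> (\<forall>u\<in>V. upper_bound S u \<longrightarrow> s \<le> u)"

definition upward_directed :: "'a::order set \<Rightarrow> bool" where
  "upward_directed J \<longleftrightarrow> (\<forall>a\<in>J. \<forall>b\<in>J. \<exists>c\<in>J. a \<le> c \<and> b \<le> c)"

definition monotone_complete :: "'a::order itself \<Rightarrow> bool" where
  "monotone_complete _ \<longleftrightarrow>
     (\<forall>J::'a set. J \<noteq> {} \<and> upward_directed J \<and> bounded_above J \<longrightarrow> (\<exists>s. is_sup J s))"

definition monotone_seq_complete :: "'a::order itself \<Rightarrow> bool" where
  "monotone_seq_complete _ \<longleftrightarrow>
     (\<forall>f::nat \<Rightarrow> 'a. incseq f \<and> bounded_above (range f) \<longrightarrow> (\<exists>s. is_sup (range f) s))"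

definition monotone_closed :: "'a::order set \<Rightarrow> bool" where
  "monotone_closed V \<longleftrightarrow>
     (\<forall>J s. J \<noteq> {} \<and> J \<subseteq> V \<and> upward_directed J \<and> bounded_above J \<and> is_sup J s \<longrightarrow> s \<in> V)"

definition monotone_seq_closed :: "'a::order set \<Rightarrow> bool" where
  "monotone_seq_closed V \<longleftrightarrow>
     (\<forall>f s. incseq f \<and> range f \<subseteq> V \<and> bounded_above (range f) \<and> is_sup (range f) s \<longrightarrow> s \<in> V)"

definition positive_functional :: "('a::ordered_real_vector \<Rightarrow> real) \<Rightarrow> bool" where
  "positive_functional \<psi> \<longleftrightarrow> linear \<psi> \<and> (\<forall>a. 0 \<le> a \<longrightarrow> 0 \<le> \<psi> a)"

definition faithful :: "('a::ordered_real_vector \<Rightarrow> real) \<Rightarrow> bool" where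
  "faithful \<psi> \<longleftrightarrow> (\<forall>a. 0 \<le> a \<and> a \<noteq> 0 \<longrightarrow> 0 < \<psi> a)"

end

theory Submission
  imports Defs
begin

lemma psi_mono:
  fixes \<psi> :: "'a::{ordered_real_vector, lattice} \<Rightarrow> real"
  assumes "positive_functional \<psi>" "x \<le> y"
  shows "\<psi> x \<le> \<psi> y"
proof -
  have "0 \<le> \<psi> (y - x)" using assms unfolding positive_functional_def by simp
  moreover have "\<psi> (y - x) = \<psi> y - \<psi> x"
    using assms(1) unfolding positive_functional_def by (simp add: linear_diff)
  ultimately show ?thesis by simp
qed

lemma psi_diff:
  fixes \<psi> :: "'a::{ordered_real_vector, lattice} \<Rightarrow> real"
  assumes "positive_functional \<psi>"
  shows "\<psi> (y - x) = \<psi> y - \<psi> x"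
  using assms unfolding positive_functional_def by (simp add: linear_diff)

lemma key:
  fixes \<psi> :: "'a::{ordered_real_vector, lattice} \<Rightarrow> real"
  assumes pf: "positive_functional \<psi>" and fa: "faithful \<psi>"
    and dir: "upward_directed J"
    and jJ: "range j \<subseteq> J" and sup: "is_sup (range j) s"
    and al: "\<forall>a\<in>J. \<psi> a \<le> \<alpha>"
    and eps: "\<forall>e>0. \<exists>n. \<alpha> - e < \<psi> (j n)"
  shows "is_sup J s"
proof -
  have ub: "a \<le> s" if aJ: "a \<in> J" for a
  proof -
    define w where "w = sup (a - s) 0"
    have w0: "0 \<le> w" unfolding w_def by simp
    have bnd: "\<psi> w \<le> \<alpha> - \<psi> (j m)" for m
    proof -
      have jms: "j m \<le> s" using sup unfolding is_sup_def upper_bound_def by auto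
      have jmJ: "j m \<in> J" using jJ by auto
      obtain d where d: "d \<in> J" "a \<le> d" "j m \<le> d" using dir aJ jmJ unfolding upward_directed_def by blast
      have "w \<le> sup a (j m) - j m"
        unfolding w_def
      proof (rule sup_least)
        have "a - s \<le> a - j m" using jms by (simp add: diff_left_mono)
        also have "\<dots> \<le> sup a (j m) - j m" by (simp add: diff_right_mono)
        finally show "a - s \<le> sup a (j m) - j m" .
        show "0 \<le> sup a (j m) - j m" by simp
      qed
      hence "\<psi> w \<le> \<psi> (sup a (j m)) - \<psi> (j m)" using psi_mono[OF pf] psi_diff[OF pf] by metis
      moreover have "\<psi> (sup a (j m)) \<le> \<psi> d" using psi_mono[OF pf] d by simp
      moreover have "\<psi> d \<le> \<alpha>" using al d by auto
      ultimately show ?thesis by linarith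
    qed
    have "\<psi> w \<le> 0"
    proof (rule ccontr)
      assume "\<not> \<psi> w \<le> 0"
      then obtain n where "\<alpha> - \<psi> w < \<psi> (j n)" using eps by force
      with bnd[of n] show False by linarith
    qed
    hence "w = 0" using fa w0 unfolding faithful_def by force
    hence "a - s \<le> 0" unfolding w_def by (metis sup_ge1)
    thus "a \<le> s" by simp
  qed
  show ?thesis unfolding is_sup_def upper_bound_def
  proof (intro conjI ballI allI impI)
    show "a \<le> s" if "a \<in> J" for a using ub that .
    fix u assume "\<forall>x\<in>J. x \<le> u"
    hence "upper_bound (range j) u" using jJ unfolding upper_bound_def by auto
    thus "s \<le> u" using sup unfolding is_sup_def by auto
  qed
qed

lemma sup_unique: "is_sup S s \<Longrightarrow> is_sup S t \<Longrightarrow> s = (t::'a::order)"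
  unfolding is_sup_def by (auto intro: order.antisym)

lemma main_sel:
  fixes \<psi> :: "'a::{ordered_real_vector, lattice} \<Rightarrow> real"
  assumes pf: "positive_functional \<psi>" and fa: "faithful \<psi>"
    and msc: "monotone_seq_complete TYPE('a)"
    and ne: "J \<noteq> {}" and dir: "upward_directed J" and ba: "bounded_above J"
  shows "\<exists>s. is_sup J s
             \<and> (\<exists>j. incseq j \<and> range j \<subseteq> J \<and> is_sup (range j) s)
             \<and> (\<forall>j. incseq j \<and> range j \<subseteq> J \<and> (SUP n. \<psi> (j n)) = (SUP a\<in>J. \<psi> a)
                    \<longrightarrow> is_sup (range j) s)"
proof -
  obtain u where u: "\<forall>x\<in>J. x \<le> u" using ba unfolding bounded_above_def upper_bound_def by blast
  define \<alpha> where "\<alpha> = (SUP a\<in>J. \<psi> a)"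
  have bdd: "bdd_above (\<psi> ` J)"
  proof (rule bdd_aboveI2)
    fix x assume "x \<in> J" thus "\<psi> x \<le> \<psi> u" using u psi_mono[OF pf] by blast
  qed
  have al: "\<forall>a\<in>J. \<psi> a \<le> \<alpha>" unfolding \<alpha>_def using bdd by (simp add: cSUP_upper)
  have gen: "\<exists>s. is_sup (range j) s \<and> is_sup J s"
    if j: "incseq j" "range j \<subseteq> J" and eps: "\<forall>e>0. \<exists>n. \<alpha> - e < \<psi> (j n)" for j
  proof -
    have "bounded_above (range j)" unfolding bounded_above_def upper_bound_def using u j by blast
    then obtain s where s: "is_sup (range j) s" using msc j unfolding monotone_seq_complete_def by blast
    have "is_sup J s" using key[OF pf fa dir j(2) s al eps] .
    with s show ?thesis by blast
  qed
  have "\<forall>n. \<exists>x\<in>J. \<alpha> - 1 / (real n + 1) < \<psi> x"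
  proof
    fix n
    have "\<alpha> - 1 / (real n + 1) < \<alpha>" by simp
    thus "\<exists>x\<in>J. \<alpha> - 1 / (real n + 1) < \<psi> x"
      unfolding \<alpha>_def using less_cSUP_iff[OF ne bdd] by blast
  qed
  then obtain x where x: "\<And>n. x n \<in> J" "\<And>n. \<alpha> - 1 / (real n + 1) < \<psi> (x n)" by metis
  define j where "j = rec_nat (x 0) (\<lambda>n p. SOME c. c \<in> J \<and> p \<le> c \<and> x (Suc n) \<le> c)"
  have jprop: "j n \<in> J \<and> x n \<le> j n \<and> j n \<le> j (Suc n)" for n
  proof (induction n)
    case 0
    have j0: "j 0 = x 0" by (simp add: j_def)
    have "\<exists>c. c \<in> J \<and> j 0 \<le> c \<and> x (Suc 0) \<le> c"
      using dir x(1)[of 0] x(1)[of "Suc 0"] unfolding upward_directed_def j0 by blast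
    from someI_ex[OF this] show ?case using x unfolding j_def by simp
  next
    case (Suc n)
    have "\<exists>c. c \<in> J \<and> j n \<le> c \<and> x (Suc n) \<le> c" using dir x Suc unfolding upward_directed_def by blast
    from someI_ex[OF this] have A: "j (Suc n) \<in> J \<and> j n \<le> j (Suc n) \<and> x (Suc n) \<le> j (Suc n)"
      unfolding j_def by simp
    have "\<exists>c. c \<in> J \<and> j (Suc n) \<le> c \<and> x (Suc (Suc n)) \<le> c" using dir x A unfolding upward_directed_def by blast
    from someI_ex[OF this] have "j (Suc n) \<le> j (Suc (Suc n))"
      unfolding j_def by simp
    with A show ?case by simp
  qed
  have jinc: "incseq j" using jprop by (simp add: incseq_SucI)
  have jJ: "range j \<subseteq> J" using jprop by auto
  have jeps: "\<forall>e>0. \<exists>n. \<alpha> - e < \<psi> (j n)"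
  proof (intro allI impI)
    fix e :: real assume "e > 0"
    then obtain n where n: "inverse (real (Suc n)) < e" using reals_Archimedean by blast
    have "\<psi> (x n) \<le> \<psi> (j n)" using psi_mono[OF pf] jprop by blast
    moreover have "1 / (real n + 1) = inverse (real (Suc n))" by (simp add: divide_inverse add.commute)
    ultimately have "\<alpha> - e < \<psi> (j n)" using x(2)[of n] n by linarith
    thus "\<exists>n. \<alpha> - e < \<psi> (j n)" by blast
  qed
  obtain s where s: "is_sup (range j) s" "is_sup J s" using gen[OF jinc jJ jeps] by blast
  show ?thesis
  proof (intro exI[of _ s] conjI allI impI)
    show "is_sup J s" by fact
    show "\<exists>j. incseq j \<and> range j \<subseteq> J \<and> is_sup (range j) s" using jinc jJ s by blast
    fix k assume k: "incseq k \<and> range k \<subseteq> J \<and> (SUP n. \<psi> (k n)) = (SUP a\<in>J. \<psi> a)"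
    have bk: "bdd_above (range (\<lambda>n. \<psi> (k n)))"
    proof (rule bdd_aboveI2)
      fix n show "\<psi> (k n) \<le> \<psi> u" using u k psi_mono[OF pf] by blast
    qed
    have keps: "\<forall>e>0. \<exists>n. \<alpha> - e < \<psi> (k n)"
    proof (intro allI impI)
      fix e :: real assume "e > 0"
      hence "\<alpha> - e < (SUP n. \<psi> (k n))" using k unfolding \<alpha>_def by simp
      thus "\<exists>n. \<alpha> - e < \<psi> (k n)" using less_cSUP_iff[OF UNIV_not_empty bk] by auto
    qed
    obtain t where t: "is_sup (range k) t" "is_sup J t" using gen[of k] k keps by blast
    have "t = s" using sup_unique t(2) s(2) by blast
    thus "is_sup (range k) s" using t by simp
  qed
qed

theorem mainTheorem1:
  fixes \<psi> :: "'a::{ordered_real_vector, lattice} \<Rightarrow> real"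
    and V :: "'a set"
  assumes "positive_functional \<psi>" and "faithful \<psi>"
    and "monotone_seq_complete TYPE('a)"
    and "monotone_seq_closed V"
  shows "monotone_complete TYPE('a)
    \<and> monotone_closed V
    \<and> (\<forall>J. J \<noteq> {} \<and> J \<subseteq> V \<and> upward_directed J \<and> bounded_above J \<longrightarrow>
           (\<exists>s. is_sup J s
             \<and> (\<exists>j. incseq j \<and> range j \<subseteq> J \<and> is_sup (range j) s)
             \<and> (\<forall>j. incseq j \<and> range j \<subseteq> J \<and> (SUP n. \<psi> (j n)) = (SUP a\<in>J. \<psi> a)
                    \<longrightarrow> is_sup (range j) s \<and> is_sup_in V (range j) s)))"
proof (intro conjI allI impI)
  note ms = main_sel[OF assms(1-3)]
  show "monotone_complete TYPE('a)"
  proof (unfold monotone_complete_def, intro allI impI)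
    fix J :: "'a set" assume "J \<noteq> {} \<and> upward_directed J \<and> bounded_above J"
    thus "\<exists>s. is_sup J s" using ms[where J=J] by auto
  qed
  have inV: "s \<in> V" if "incseq j" "range j \<subseteq> V" "is_sup (range j) s" for j s
  proof -
    have "bounded_above (range j)" using that(3) unfolding is_sup_def bounded_above_def by blast
    thus ?thesis using assms(4) that unfolding monotone_seq_closed_def by blast
  qed
  show "monotone_closed V" unfolding monotone_closed_def
  proof (intro allI impI)
    fix J s assume H: "J \<noteq> {} \<and> J \<subseteq> V \<and> upward_directed J \<and> bounded_above J \<and> is_sup J s"
    then obtain t j where "is_sup J t" "incseq j" "range j \<subseteq> J" "is_sup (range j) t"
      using ms[where J=J] by auto
    moreover have "t = s" using sup_unique H \<open>is_sup J t\<close> by blast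
    ultimately show "s \<in> V" using inV H by blast
  qed
  fix J assume H: "J \<noteq> {} \<and> J \<subseteq> V \<and> upward_directed J \<and> bounded_above J"
  then obtain s where s: "is_sup J s" "\<exists>j. incseq j \<and> range j \<subseteq> J \<and> is_sup (range j) s"
     "\<forall>j. incseq j \<and> range j \<subseteq> J \<and> (SUP n. \<psi> (j n)) = (SUP a\<in>J. \<psi> a) \<longrightarrow> is_sup (range j) s"
    using ms[where J=J] by auto
  show "\<exists>s. is_sup J s
             \<and> (\<exists>j. incseq j \<and> range j \<subseteq> J \<and> is_sup (range j) s)
             \<and> (\<forall>j. incseq j \<and> range j \<subseteq> J \<and> (SUP n. \<psi> (j n)) = (SUP a\<in>J. \<psi> a)
                    \<longrightarrow> is_sup (range j) s \<and> is_sup_in V (range j) s)"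
  proof (intro exI[of _ s] conjI allI impI)
    show "is_sup J s" "\<exists>j. incseq j \<and> range j \<subseteq> J \<and> is_sup (range j) s" using s by auto
    fix j assume j: "incseq j \<and> range j \<subseteq> J \<and> (SUP n. \<psi> (j n)) = (SUP a\<in>J. \<psi> a)"
    hence js: "is_sup (range j) s" using s by blast
    thus "is_sup (range j) s" .
    have "s \<in> V" using inV[of j s] j js H by blast
    thus "is_sup_in V (range j) s" using js unfolding is_sup_def is_sup_in_def by blast
  qed
qed

end
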